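(* For $|q|<1$, $$\sum_{n=0}^\infty\frac{q^{4n^2}(-q;q^2)_{2n}\left(1-q^{4n+1}-q^{8n+2}-q^{8n+4}\right)}{(q^4;q^4)_{2n+1}}=\frac{(q;q)_\infty}{(q^4;q^4)_\infty}.$$
   Context: $(a;q)_n=\prod_{k=0}^{n-1}(1-aq^k)$, $(a;q)_\infty=\prod_{k\ge0}(1-aq^k)$. *)

theory Defs
  imports "HOL-Analysis.Analysis"
begin

definition qpoch :: "complex \<Rightarrow> complex \<Rightarrow> nat \<Rightarrow> complex" where
  "qpoch a q n = (\<Prod>k<n. 1 - a * q ^ k)"

definition qpoch_inf :: "complex \<Rightarrow> complex \<Rightarrow> complex" where
  "qpoch_inf a q = (\<Prod>k. 1 - a * q ^ k)"

end

theory Submission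
  imports Defs
begin


fun qb :: "complex \<Rightarrow> nat \<Rightarrow> nat \<Rightarrow> complex" where
  "qb x 0 m = (if m = 0 then 1 else 0)"
| "qb x (Suc N) 0 = 1"
| "qb x (Suc N) (Suc m) = qb x N m + x ^ Suc m * qb x N (Suc m)"

fun uu :: "complex \<Rightarrow> complex \<Rightarrow> complex \<Rightarrow> nat \<Rightarrow> complex" where
  "uu x a z 0 = 1"
| "uu x a z (Suc j) = - (x ^ j * z * (1 - a * x ^ j)) * uu x a z j"

lemma qb_zero: "N < m \<Longrightarrow> qb x N m = 0"
proof (induction N arbitrary: m)
  case 0 then show ?case by simp
next
  case (Suc N)
  then obtain k where k: "m = Suc k" "N < k" by (cases m) auto
  then show ?case using Suc.IH by simp
qed

lemma qb_0 [simp]: "qb x N 0 = 1" by (cases N) auto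

lemma qpoch_Suc_shift: "qpoch c x (Suc n) = (1 - c) * qpoch (c * x) x n"
  unfolding qpoch_def by (subst prod.lessThan_Suc_shift) (simp add: mult.assoc)

lemma qpoch_Suc: "qpoch c x (Suc n) = qpoch c x n * (1 - c * x ^ n)"
  unfolding qpoch_def by simp

lemma uu_shift: "uu x a (z * x) j = x ^ j * uu x a z j"
  by (induction j) (auto simp: algebra_simps)

lemma finite_id:
  "(\<Sum>m\<le>N. qb x N m * uu x a z m * qpoch (a * z * x ^ m) x (N - m)) = qpoch z x N"
proof (induction N arbitrary: z)
  case 0 then show ?case by (simp add: qpoch_def)
next
  case (Suc N)
  define F where "F m = qb x N m * uu x a z m" for m
  have A: "(\<Sum>m\<le>Suc N. qb x (Suc N) m * uu x a z m * qpoch (a * z * x ^ m) x (Suc N - m))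
     = (1 - a*z) * qpoch (a*z*x) x N
       + (\<Sum>j\<le>N. qb x N j * uu x a z (Suc j) * qpoch (a * z * x ^ Suc j) x (N - j))
       + (\<Sum>j\<le>N. x ^ Suc j * qb x N (Suc j) * uu x a z (Suc j) * qpoch (a * z * x ^ Suc j) x (N - j))"
    apply (subst sum.atMost_Suc_shift)
    apply (simp del: uu.simps(2) add: qpoch_Suc_shift distrib_right sum.distrib add.assoc)
    done
  have B: "(1 - a*z) * qpoch (a*z*x) x N
       + (\<Sum>j\<le>N. x ^ Suc j * qb x N (Suc j) * uu x a z (Suc j) * qpoch (a * z * x ^ Suc j) x (N - j))
     = (\<Sum>m\<le>N. x ^ m * F m * (1 - a*z*x^m) * qpoch (a * z * x ^ Suc m) x (N - m))"
  proof -
    have "(\<Sum>j\<le>N. x ^ Suc j * qb x N (Suc j) * uu x a z (Suc j) * qpoch (a * z * x ^ Suc j) x (N - j))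
       = (\<Sum>j<N. x ^ Suc j * F (Suc j) * (1 - a*z*x^Suc j) * qpoch (a * z * x ^ Suc (Suc j)) x (N - Suc j))"
    proof -
      have "(\<Sum>j\<le>N. x ^ Suc j * qb x N (Suc j) * uu x a z (Suc j) * qpoch (a * z * x ^ Suc j) x (N - j))
         = (\<Sum>j<N. x ^ Suc j * qb x N (Suc j) * uu x a z (Suc j) * qpoch (a * z * x ^ Suc j) x (N - j))"
        by (simp add: lessThan_Suc_atMost[symmetric] qb_zero)
      also have "\<dots> = (\<Sum>j<N. x ^ Suc j * F (Suc j) * (1 - a*z*x^Suc j) * qpoch (a * z * x ^ Suc (Suc j)) x (N - Suc j))"
      proof (rule sum.cong[OF refl])
        fix j assume "j \<in> {..<N}"
        then have "N - j = Suc (N - Suc j)" by auto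
        then show "x ^ Suc j * qb x N (Suc j) * uu x a z (Suc j) * qpoch (a * z * x ^ Suc j) x (N - j)
          = x ^ Suc j * F (Suc j) * (1 - a*z*x^Suc j) * qpoch (a * z * x ^ Suc (Suc j)) x (N - Suc j)"
          by (simp only:) (simp add: qpoch_Suc_shift F_def algebra_simps)
      qed
      finally show ?thesis .
    qed
    moreover have "(\<Sum>m\<le>N. x ^ m * F m * (1 - a*z*x^m) * qpoch (a * z * x ^ Suc m) x (N - m))
       = (\<Sum>m<Suc N. x ^ m * F m * (1 - a*z*x^m) * qpoch (a * z * x ^ Suc m) x (N - m))"
      by (simp add: lessThan_Suc_atMost)
    moreover have "\<dots> = (1 - a*z) * qpoch (a*z*x) x N
       + (\<Sum>j<N. x ^ Suc j * F (Suc j) * (1 - a*z*x^Suc j) * qpoch (a * z * x ^ Suc (Suc j)) x (N - Suc j))"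
      by (subst sum.lessThan_Suc_shift) (simp add: F_def)
    ultimately show ?thesis by simp
  qed
  have C: "(\<Sum>j\<le>N. qb x N j * uu x a z (Suc j) * qpoch (a * z * x ^ Suc j) x (N - j))
     + (\<Sum>m\<le>N. x ^ m * F m * (1 - a*z*x^m) * qpoch (a * z * x ^ Suc m) x (N - m))
     = (1 - z) * (\<Sum>m\<le>N. qb x N m * uu x a (z*x) m * qpoch (a * (z*x) * x ^ m) x (N - m))"
    unfolding uu_shift by (simp add: sum.distrib[symmetric] sum_distrib_left F_def algebra_simps)
  note A
  also have "(1 - a*z) * qpoch (a*z*x) x N
       + (\<Sum>j\<le>N. qb x N j * uu x a z (Suc j) * qpoch (a * z * x ^ Suc j) x (N - j))
       + (\<Sum>j\<le>N. x ^ Suc j * qb x N (Suc j) * uu x a z (Suc j) * qpoch (a * z * x ^ Suc j) x (N - j))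
     = (\<Sum>j\<le>N. qb x N j * uu x a z (Suc j) * qpoch (a * z * x ^ Suc j) x (N - j))
     + (\<Sum>m\<le>N. x ^ m * F m * (1 - a*z*x^m) * qpoch (a * z * x ^ Suc m) x (N - m))"
    using B by (simp add: algebra_simps)
  also note C
  also have "(1 - z) * (\<Sum>m\<le>N. qb x N m * uu x a (z*x) m * qpoch (a * (z*x) * x ^ m) x (N - m))
     = qpoch z x (Suc N)" using Suc.IH[of "z*x"] by (simp add: qpoch_Suc_shift)
  finally show ?case .
qed

lemma qb_r: "qb x N m * qpoch x x m = (\<Prod>j<m. 1 - x ^ (N - j))"
proof (induction N arbitrary: m)
  case 0 then show ?case
    by (cases m) (auto simp: qpoch_def prod.lessThan_Suc_shift)
next
  case (Suc N)
  show ?case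
  proof (cases m)
    case 0 then show ?thesis by (simp add: qpoch_def)
  next
    case (Suc k)
    define r where "r = (\<Prod>j<k. 1 - x ^ (N - j))"
    have r1: "(\<Prod>j<Suc k. 1 - x ^ (N - j)) = r * (1 - x ^ (N - k))" by (simp add: r_def)
    have r2: "(\<Prod>j<Suc k. 1 - x ^ (Suc N - j)) = (1 - x ^ Suc N) * r"
      by (subst prod.lessThan_Suc_shift) (simp add: r_def)
    have e: "r * (1 - x ^ Suc k) + x ^ Suc k * (r * (1 - x ^ (N - k))) = (1 - x ^ Suc N) * r"
    proof (cases "k \<le> N")
      case True
      then have "x ^ Suc k * x ^ (N - k) = x ^ Suc N" by (simp flip: power_add)
      then show ?thesis by (simp add: algebra_simps) (metis mult.assoc mult.commute)
    next
      case False
      then have "r = 0" unfolding r_def using False by (intro prod_zero) (auto intro!: bexI[of _ N])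
      then show ?thesis by simp
    qed
    have "qb x (Suc N) m * qpoch x x m = qb x N k * qpoch x x k * (1 - x ^ Suc k)
        + x ^ Suc k * (qb x N (Suc k) * qpoch x x (Suc k))"
      using Suc by (simp add: qpoch_Suc algebra_simps)
    also have "\<dots> = (1 - x ^ Suc N) * r" using Suc.IH[of k] Suc.IH[of "Suc k"] r1 e by (simp add: r_def)
    finally show ?thesis using Suc r2 by simp
  qed
qed



lemma qpoch_convergent_prod:
  fixes c x :: complex
  assumes "norm x < 1"
  shows "convergent_prod (\<lambda>k. 1 - c * x ^ k)"
proof -
  have "summable (\<lambda>k. norm c * norm x ^ k)"
    using assms by (intro summable_mult summable_geometric) auto
  moreover have "(\<lambda>k. norm ((1 - c * x ^ k) - 1)) = (\<lambda>k. norm c * norm x ^ k)"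
    by (simp add: fun_eq_iff norm_mult norm_power)
  ultimately have "summable (\<lambda>k. norm ((1 - c * x ^ k) - 1))" by simp
  then show ?thesis
    by (intro abs_convergent_prod_imp_convergent_prod summable_imp_abs_convergent_prod)
qed

lemma qpoch_lim:
  assumes "norm x < 1"
  shows "(\<lambda>n. qpoch c x n) \<longlonglongrightarrow> qpoch_inf c x"
proof -
  have "(\<lambda>n. \<Prod>i\<le>n. 1 - c * x ^ i) \<longlonglongrightarrow> qpoch_inf c x"
    unfolding qpoch_inf_def by (rule convergent_prod_LIMSEQ[OF qpoch_convergent_prod[OF assms]])
  then have "(\<lambda>n. qpoch c x (Suc n)) \<longlonglongrightarrow> qpoch_inf c x"
    by (simp add: qpoch_def lessThan_Suc_atMost)
  then show ?thesis by (rule LIMSEQ_imp_Suc)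
qed

lemma qpoch_inf_nz:
  assumes "norm x < 1" "\<And>k. c * x ^ k \<noteq> 1"
  shows "qpoch_inf c x \<noteq> 0"
  unfolding qpoch_inf_def
  by (rule prodinf_nonzero[OF qpoch_convergent_prod[OF assms(1)]]) (use assms(2) in auto)

lemma qpoch_0 [simp]: "qpoch c x 0 = 1" by (simp add: qpoch_def)

lemma qpoch_add: "qpoch c x (m + n) = qpoch c x m * qpoch (c * x ^ m) x n"
  by (induction n) (auto simp: qpoch_Suc power_add algebra_simps)

lemma qpoch_inf_shift:
  assumes "norm x < 1"
  shows "qpoch_inf c x = qpoch c x m * qpoch_inf (c * x ^ m) x"
proof -
  have "(\<lambda>n. qpoch c x (n + m)) \<longlonglongrightarrow> qpoch_inf c x"
    by (rule LIMSEQ_ignore_initial_segment[OF qpoch_lim[OF assms]])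
  moreover have "(\<lambda>n. qpoch c x (n + m)) \<longlonglongrightarrow> qpoch c x m * qpoch_inf (c * x ^ m) x"
    using tendsto_mult[OF tendsto_const qpoch_lim[OF assms, of "c * x ^ m"]]
    by (simp add: qpoch_add add.commute[of _ m])
  ultimately show ?thesis by (rule LIMSEQ_unique)
qed

lemma LIMSEQ_minus_const: "g \<longlonglongrightarrow> l \<Longrightarrow> (\<lambda>N. g (N - j)) \<longlonglongrightarrow> l"
  by (rule LIMSEQ_offset[of _ j]) simp

lemma qpoch_bound:
  assumes "norm x < 1" "norm c \<le> C"
  shows "norm (qpoch c x n) \<le> exp (C / (1 - norm x))"
proof -
  have C0: "0 \<le> C" using assms(2) norm_ge_zero[of c] by linarith
  have "norm (qpoch c x n) \<le> (\<Prod>k<n. 1 + C * norm x ^ k)"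
    unfolding qpoch_def
    apply (rule order.trans[OF norm_prod_le])
    apply (rule prod_mono)
    apply (intro conjI norm_ge_zero)
    apply (rule order.trans[OF norm_triangle_ineq4])
    apply (auto simp: norm_mult norm_power intro!: mult_right_mono assms)
    done
  also have "\<dots> \<le> exp (\<Sum>k<n. C * norm x ^ k)"
    using assms C0 by (intro prod_le_exp_sum) auto
  also have "(\<Sum>k<n. C * norm x ^ k) \<le> (\<Sum>k. C * norm x ^ k)"
    using assms by (intro sum_le_suminf summable_mult summable_geometric)
      (use C0 in auto)
  also have "(\<Sum>k. C * norm x ^ k) = C / (1 - norm x)"
    using assms by (simp add: suminf_mult suminf_geometric divide_simps)
  finally show ?thesis by simp
qed

definition rr :: "complex \<Rightarrow> nat \<Rightarrow> nat \<Rightarrow> complex" where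
  "rr x N m = (\<Prod>j<m. 1 - x ^ (N - j))"

lemma rr_lim: "norm x < 1 \<Longrightarrow> (\<lambda>N. rr x N m) \<longlonglongrightarrow> 1"
proof -
  assume x: "norm x < 1"
  have "(\<lambda>N. \<Prod>j<m. 1 - x ^ (N - j)) \<longlonglongrightarrow> (\<Prod>j<m. 1 - 0)"
    by (intro tendsto_prod tendsto_diff tendsto_const LIMSEQ_minus_const LIMSEQ_power_zero x)
  then show ?thesis by (simp add: rr_def)
qed

lemma rr_bound: "norm x < 1 \<Longrightarrow> norm (rr x N m) \<le> 2 ^ m"
proof -
  assume x: "norm x < 1"
  have "norm (rr x N m) \<le> (\<Prod>j<m. 2)"
    unfolding rr_def
    apply (rule order.trans[OF norm_prod_le])
    apply (rule prod_mono)
    apply (intro conjI norm_ge_zero)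
    apply (rule order.trans[OF norm_triangle_ineq4])
    using x by (auto simp: norm_power power_le_one)
  then show ?thesis by simp
qed

lemma qpoch_lower:
  assumes "norm x < 1"
  shows "(1 - norm x) ^ m \<le> norm (qpoch x x m)"
proof -
  have "(1 - norm x) ^ m = (\<Prod>k<m. 1 - norm x)" by simp
  also have "\<dots> \<le> (\<Prod>k<m. norm (1 - x * x ^ k))"
  proof (rule prod_mono, intro conjI)
    fix k assume "k \<in> {..<m}"
    show "0 \<le> 1 - norm x" using assms by simp
    have "norm (x * x ^ k) \<le> norm x"
      using assms by (simp add: norm_mult norm_power mult_left_le power_le_one)
    moreover have "1 - norm (x * x ^ k) \<le> norm (1 - x * x ^ k)"
      using norm_triangle_ineq2[of 1 "x * x ^ k"] by simp
    ultimately show "1 - norm x \<le> norm (1 - x * x ^ k)" by linarith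
  qed
  also have "\<dots> = norm (qpoch x x m)" by (simp add: qpoch_def prod_norm)
  finally show ?thesis .
qed



fun Wf :: "real \<Rightarrow> real \<Rightarrow> nat \<Rightarrow> real" where
  "Wf B t 0 = 1"
| "Wf B t (Suc j) = t ^ j * B * Wf B t j"

lemma Wf_nonneg: "0 \<le> B \<Longrightarrow> 0 \<le> t \<Longrightarrow> 0 \<le> Wf B t m"
  by (induction m) auto

lemma Wf_summable:
  assumes "0 \<le> B" "0 \<le> t" "t < 1"
  shows "summable (Wf B t)"
proof -
  have "(\<lambda>n. t ^ n * B) \<longlonglongrightarrow> 0 * B"
    using assms by (intro tendsto_mult tendsto_const LIMSEQ_power_zero) auto
  then have "eventually (\<lambda>n. t ^ n * B < 1/2) sequentially"
    by (intro order_tendstoD) auto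
  then obtain N where N: "\<And>n. n \<ge> N \<Longrightarrow> t ^ n * B < 1/2"
    by (auto simp: eventually_sequentially)
  show ?thesis
  proof (rule summable_ratio_test[of "1/2" N])
    fix n assume "N \<le> n"
    then have "t ^ n * B \<le> 1/2" using N[of n] by simp
    then have "t ^ n * B * Wf B t n \<le> 1/2 * Wf B t n"
      using Wf_nonneg[OF assms(1,2)] by (intro mult_right_mono) auto
    then show "norm (Wf B t (Suc n)) \<le> 1/2 * norm (Wf B t n)"
      using Wf_nonneg[OF assms(1,2), of n] Wf_nonneg[OF assms(1,2), of "Suc n"] assms
      by simp
  qed simp
qed

lemma uu_bound:
  assumes x: "norm x < 1"
  shows "norm (uu x a z m) * 2 ^ m / (1 - norm x) ^ m
     \<le> Wf (norm z * (1 + norm a) * 2 / (1 - norm x)) (norm x) m"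
proof (induction m)
  case 0 then show ?case by simp
next
  case (Suc j)
  define B where "B = norm z * (1 + norm a) * 2 / (1 - norm x)"
  have d: "0 < 1 - norm x" using x by simp
  have h1: "norm (1 - a * x ^ j) \<le> 1 + norm a"
  proof -
    have "norm (a * x ^ j) \<le> norm a"
      using x by (simp add: norm_mult norm_power mult_left_le power_le_one)
    then show ?thesis using norm_triangle_ineq4[of 1 "a * x ^ j"] by simp
  qed
  have "norm (uu x a z (Suc j)) * 2 ^ Suc j / (1 - norm x) ^ Suc j
      = (norm x ^ j * (norm z * norm (1 - a * x ^ j) * 2 / (1 - norm x)))
        * (norm (uu x a z j) * 2 ^ j / (1 - norm x) ^ j)"
  proof -
    have "norm (uu x a z (Suc j)) = norm x ^ j * norm z * norm (1 - a * x ^ j) * norm (uu x a z j)"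
      by (simp only: uu.simps norm_minus_cancel norm_mult norm_power)
    then show ?thesis using d by (simp add: field_simps)
  qed
  also have "\<dots> \<le> (norm x ^ j * B) * Wf B (norm x) j"
  proof (rule mult_mono)
    show "norm x ^ j * (norm z * norm (1 - a * x ^ j) * 2 / (1 - norm x)) \<le> norm x ^ j * B"
      unfolding B_def using d h1
      by (intro mult_left_mono divide_right_mono mult_right_mono) auto
    show "norm (uu x a z j) * 2 ^ j / (1 - norm x) ^ j \<le> Wf B (norm x) j"
      using Suc by (simp add: B_def)
    show "0 \<le> norm x ^ j * B" unfolding B_def using d by simp
    show "0 \<le> norm (uu x a z j) * 2 ^ j / (1 - norm x) ^ j" using d by simp
  qed
  finally show ?case by (simp add: B_def)
qed

lemma qpoch_xx_nz: "norm x < 1 \<Longrightarrow> qpoch x x m \<noteq> 0"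
  using qpoch_lower[of x m] by (auto simp: not_le) (smt (verit) zero_less_power)

lemma main_series:
  assumes x: "norm x < 1"
  shows "(\<lambda>m. uu x a z m / qpoch x x m * qpoch_inf (a * z * x ^ m) x) sums qpoch_inf z x"
proof -
  define f where "f m N = uu x a z m * rr x N m / qpoch x x m * qpoch (a * z * x ^ m) x (N - m)" for m N
  define b where "b m = uu x a z m / qpoch x x m * qpoch_inf (a * z * x ^ m) x" for m
  define B where "B = norm z * (1 + norm a) * 2 / (1 - norm x)"
  define K where "K = exp (norm (a * z) / (1 - norm x))"
  have d: "0 < 1 - norm x" using x by simp
  have fin: "(\<Sum>m. f m N) = qpoch z x N" for N
  proof -
    have "(\<Sum>m. f m N) = (\<Sum>m\<le>N. f m N)"
    proof (rule suminf_finite)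
      fix m assume "m \<notin> {..N}"
      then have "rr x N m = 0" unfolding rr_def by (intro prod_zero) (auto intro!: bexI[of _ N])
      then show "f m N = 0" by (simp add: f_def)
    qed simp
    also have "\<dots> = (\<Sum>m\<le>N. qb x N m * uu x a z m * qpoch (a * z * x ^ m) x (N - m))"
    proof (rule sum.cong[OF refl])
      fix m
      have "qb x N m = rr x N m / qpoch x x m"
        using qb_r[of x N m] qpoch_xx_nz[OF x, of m] by (simp add: rr_def field_simps)
      then show "f m N = qb x N m * uu x a z m * qpoch (a * z * x ^ m) x (N - m)"
        by (simp add: f_def)
    qed
    also have "\<dots> = qpoch z x N" by (rule finite_id)
    finally show ?thesis .
  qed
  have lim: "(\<lambda>N. f m N) \<longlonglongrightarrow> b m" for m
  proof -
    have "(\<lambda>N. uu x a z m * rr x N m / qpoch x x m * qpoch (a * z * x ^ m) x (N - m))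
       \<longlonglongrightarrow> uu x a z m * 1 / qpoch x x m * qpoch_inf (a * z * x ^ m) x"
      by (intro tendsto_mult tendsto_divide tendsto_const rr_lim x LIMSEQ_minus_const qpoch_lim
          qpoch_xx_nz)
    then show ?thesis by (simp add: f_def b_def)
  qed
  have bound: "norm (f m N) \<le> K * Wf B (norm x) m" for m N
  proof -
    have n1: "norm (qpoch (a * z * x ^ m) x (N - m)) \<le> K"
      unfolding K_def using x
      by (intro qpoch_bound) (auto simp: norm_mult norm_power mult_left_le power_le_one)
    have n2: "norm (rr x N m) / norm (qpoch x x m) \<le> 2 ^ m / (1 - norm x) ^ m"
      using rr_bound[OF x, of N m] qpoch_lower[OF x, of m] d
      by (intro frac_le) auto
    have "norm (f m N) = norm (uu x a z m) * (norm (rr x N m) / norm (qpoch x x m))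
        * norm (qpoch (a * z * x ^ m) x (N - m))"
      by (simp add: f_def norm_mult norm_divide)
    also have "\<dots> \<le> norm (uu x a z m) * (2 ^ m / (1 - norm x) ^ m) * K"
      using d by (intro mult_mono mult_left_mono n1 n2) (auto intro!: divide_nonneg_nonneg)
    also have "\<dots> \<le> Wf B (norm x) m * K"
      using uu_bound[OF x, of a z m] unfolding B_def K_def
      by (intro mult_right_mono) auto
    finally show ?thesis by (simp add: mult.commute)
  qed
  have sK: "summable (\<lambda>m. K * Wf B (norm x) m)"
    unfolding B_def using d x by (intro summable_mult Wf_summable) auto
  have T: "eventually (\<lambda>n. summable (\<lambda>k. norm (f k n))) sequentially \<and>
           summable (\<lambda>n. norm (b n)) \<and>
           (\<lambda>n. suminf (\<lambda>k. f k n)) \<longlonglongrightarrow> suminf b"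
    by (rule tannerys_theorem[OF lim _ sK]) (auto intro: always_eventually bound)
  then have "(\<lambda>N. qpoch z x N) \<longlonglongrightarrow> suminf b" using fin by simp
  then have "suminf b = qpoch_inf z x" using qpoch_lim[OF x] LIMSEQ_unique by blast
  moreover have "summable b" using T summable_norm_cancel by blast
  ultimately show ?thesis unfolding b_def[abs_def] using summable_sums by fastforce
qed



lemma qpoch_nz:
  assumes "\<And>k. c * x ^ k \<noteq> 1"
  shows "qpoch c x m \<noteq> 0"
  unfolding qpoch_def using assms by (auto simp: prod_zero_iff)

lemma small_ne1:
  fixes c x :: complex
  assumes "norm c < 1" "norm x \<le> 1"
  shows "c * x ^ k \<noteq> 1"
proof
  assume "c * x ^ k = 1"
  then have "norm (c * x ^ k) = 1" by simp
  moreover have "norm (c * x ^ k) \<le> norm c"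
    using assms by (simp add: norm_mult norm_power mult_left_le power_le_one)
  ultimately show False using assms by simp
qed

lemma uu_spec: "uu (q\<^sup>2) (- q) q m = (-1) ^ m * q ^ (m\<^sup>2) * qpoch (- q) (q\<^sup>2) m"
proof (induction m)
  case 0 then show ?case by simp
next
  case (Suc j)
  have e: "(Suc j)\<^sup>2 = j\<^sup>2 + 2 * j + 1" by (simp add: power2_eq_square)
  show ?case
    by (simp only: uu.simps Suc qpoch_Suc e power_add power_mult) (simp add: algebra_simps power2_eq_square)
qed

lemma qpoch_pm: "qpoch c c m * qpoch (- c) c m = qpoch (c\<^sup>2) (c\<^sup>2) m"
  unfolding qpoch_def prod.distrib[symmetric]
  by (rule prod.cong[OF refl]) (simp add: algebra_simps power2_eq_square power_mult_distrib)

lemma qpoch_even: "qpoch q q (2 * N) = qpoch q (q\<^sup>2) N * qpoch (q\<^sup>2) (q\<^sup>2) N"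
proof (induction N)
  case 0 then show ?case by simp
next
  case (Suc N)
  have "qpoch q q (2 * Suc N) = qpoch q q (Suc (Suc (2 * N)))" by simp
  also have "\<dots> = qpoch q q (2 * N) * (1 - q * q ^ (2 * N)) * (1 - q * q ^ Suc (2 * N))"
    by (simp only: qpoch_Suc)
  also have "\<dots> = qpoch q (q\<^sup>2) (Suc N) * qpoch (q\<^sup>2) (q\<^sup>2) (Suc N)"
    using Suc by (simp add: qpoch_Suc power_mult algebra_simps power2_eq_square)
  finally show ?case .
qed



theorem mainTheorem9:
  fixes q :: complex
  assumes "norm q < 1"
  shows "(\<lambda>n. q ^ (4 * n\<^sup>2) * qpoch (- q) (q\<^sup>2) (2 * n)
              * (1 - q ^ (4 * n + 1) - q ^ (8 * n + 2) - q ^ (8 * n + 4))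
              / qpoch (q ^ 4) (q ^ 4) (2 * n + 1))
         sums (qpoch_inf q q / qpoch_inf (q ^ 4) (q ^ 4))"
proof -
  have q1: "norm q \<le> 1" using assms by simp
  have nq2: "norm (q\<^sup>2) < 1" using assms by (simp add: norm_power power_less_one_iff)
  have nq4: "norm (q ^ 4) < 1" using assms by (simp add: norm_power power_less_one_iff)
  have nmq2: "norm (- (q\<^sup>2)) < 1" using nq2 by simp
  have ne_m: "\<And>k. - (q\<^sup>2) * (q\<^sup>2) ^ k \<noteq> 1" using small_ne1[OF nmq2] nq2 by simp
  have ne_4: "\<And>k. q ^ 4 * (q ^ 4) ^ k \<noteq> 1" using small_ne1[OF nq4] nq4 by simp
  have ne_q: "\<And>k. q * q ^ k \<noteq> 1" using small_ne1[OF assms] q1 by simp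
  define C where "C = qpoch_inf (- (q\<^sup>2)) (q\<^sup>2)"
  have Cnz: "C \<noteq> 0" unfolding C_def by (rule qpoch_inf_nz[OF nq2 ne_m])
  define g where "g m = (-1) ^ m * q ^ (m\<^sup>2) * qpoch (- q) (q\<^sup>2) m / qpoch (q ^ 4) (q ^ 4) m" for m
  have S1: "(\<lambda>m. uu (q\<^sup>2) (- q) q m / qpoch (q\<^sup>2) (q\<^sup>2) m * qpoch_inf ((- q) * q * (q\<^sup>2) ^ m) (q\<^sup>2))
      sums qpoch_inf q (q\<^sup>2)" by (rule main_series[OF nq2])
  have "uu (q\<^sup>2) (- q) q m / qpoch (q\<^sup>2) (q\<^sup>2) m * qpoch_inf ((- q) * q * (q\<^sup>2) ^ m) (q\<^sup>2)
      = g m * C" for m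
  proof -
    have sh: "C = qpoch (- (q\<^sup>2)) (q\<^sup>2) m * qpoch_inf (- (q\<^sup>2) * (q\<^sup>2) ^ m) (q\<^sup>2)"
      unfolding C_def by (rule qpoch_inf_shift[OF nq2])
    have nz: "qpoch (- (q\<^sup>2)) (q\<^sup>2) m \<noteq> 0" by (rule qpoch_nz[OF ne_m])
    have nz2: "qpoch (q\<^sup>2) (q\<^sup>2) m \<noteq> 0" by (rule qpoch_xx_nz[OF nq2])
    have pm: "qpoch (q\<^sup>2) (q\<^sup>2) m * qpoch (- (q\<^sup>2)) (q\<^sup>2) m = qpoch (q ^ 4) (q ^ 4) m"
      using qpoch_pm[of "q\<^sup>2" m] by (simp flip: power_mult)
    have e: "(- q) * q * (q\<^sup>2) ^ m = - (q\<^sup>2) * (q\<^sup>2) ^ m" by (simp add: power2_eq_square)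
    show ?thesis unfolding g_def uu_spec e using sh nz nz2 pm[symmetric]
      by (simp add: field_simps)
  qed
  then have "(\<lambda>m. g m * C) sums qpoch_inf q (q\<^sup>2)" using S1 by simp
  then have "(\<lambda>m. g m * C / C) sums (qpoch_inf q (q\<^sup>2) / C)" by (rule sums_divide)
  then have Sg: "g sums (qpoch_inf q (q\<^sup>2) / C)" using Cnz by simp
  have G: "(\<lambda>n. sum g {n * 2 ..< n * 2 + 2}) sums (qpoch_inf q (q\<^sup>2) / C)"
    by (rule sums_group[OF Sg]) simp
  have term_eq: "sum g {n * 2 ..< n * 2 + 2} =
      q ^ (4 * n\<^sup>2) * qpoch (- q) (q\<^sup>2) (2 * n)
              * (1 - q ^ (4 * n + 1) - q ^ (8 * n + 2) - q ^ (8 * n + 4))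
              / qpoch (q ^ 4) (q ^ 4) (2 * n + 1)" for n
  proof -
    define A where "A = q ^ (4 * n\<^sup>2)"
    define B where "B = q ^ (4 * n)"
    define P where "P = qpoch (- q) (q\<^sup>2) (2 * n)"
    define Q where "Q = qpoch (q ^ 4) (q ^ 4) (2 * n)"
    have s: "sum g {n * 2 ..< n * 2 + 2} = g (2 * n) + g (Suc (2 * n))"
      by (simp add: numeral_2_eq_2 mult.commute)
    have e1: "q ^ ((2 * n)\<^sup>2) = A" unfolding A_def by (simp add: power2_eq_square algebra_simps)
    have e2: "q ^ ((Suc (2 * n))\<^sup>2) = A * B * q"
    proof -
      have "(Suc (2 * n))\<^sup>2 = 4 * n\<^sup>2 + 4 * n + 1" by (simp add: power2_eq_square algebra_simps)
      then show ?thesis unfolding A_def B_def by (simp add: power_add)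
    qed
    have e3: "q ^ (4 * n + 1) = B * q" unfolding B_def by simp
    have e4: "q ^ (8 * n + 2) = B * B * q\<^sup>2"
      unfolding B_def by (simp add: power_add flip: power_mult power2_eq_square)
    have e5: "q ^ (8 * n + 4) = B * B * q ^ 4"
      unfolding B_def by (simp add: power_add flip: power_mult power2_eq_square)
    have e6: "(q\<^sup>2) ^ (2 * n) = B" unfolding B_def by (simp flip: power_mult)
    have e7: "(q ^ 4) ^ (2 * n) = B * B" unfolding B_def by (simp flip: power_mult power_add)
    have Qs: "qpoch (q ^ 4) (q ^ 4) (2 * n + 1) = Q * (1 - q ^ 4 * (B * B))"
      unfolding Q_def Suc_eq_plus1[symmetric] by (simp only: qpoch_Suc e7)
    have Qs2: "qpoch (q ^ 4) (q ^ 4) (Suc (2 * n)) = Q * (1 - q ^ 4 * (B * B))"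
      using Qs by simp
    have Ps: "qpoch (- q) (q\<^sup>2) (Suc (2 * n)) = P * (1 + q * B)"
      unfolding P_def by (simp only: qpoch_Suc e6) simp
    have q6: "q * (q * q ^ 4) = q ^ 6" by (simp add: eval_nat_numeral)
    have Qnz: "Q \<noteq> 0" unfolding Q_def by (rule qpoch_nz[OF ne_4])
    have Q1nz: "Q * (1 - q ^ 4 * (B * B)) \<noteq> 0"
      using qpoch_nz[OF ne_4, of "2 * n + 1"] Qs by simp
    then have d1: "1 - q ^ 4 * (B * B) \<noteq> 0" by simp
    show ?thesis
      unfolding s g_def e1 e2 e3 e4 e5 Qs Qs2 Ps A_def[symmetric] P_def[symmetric] Q_def[symmetric]
      using Qnz d1 by (simp add: field_simps) (simp add: algebra_simps power2_eq_square q6)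
  qed
  have main: "(\<lambda>n. q ^ (4 * n\<^sup>2) * qpoch (- q) (q\<^sup>2) (2 * n)
              * (1 - q ^ (4 * n + 1) - q ^ (8 * n + 2) - q ^ (8 * n + 4))
              / qpoch (q ^ 4) (q ^ 4) (2 * n + 1)) sums (qpoch_inf q (q\<^sup>2) / C)"
    using G term_eq by simp
  have fin: "qpoch q q (2 * N) * qpoch (- (q\<^sup>2)) (q\<^sup>2) N = qpoch q (q\<^sup>2) N * qpoch (q ^ 4) (q ^ 4) N" for N
  proof -
    have pm: "qpoch (q\<^sup>2) (q\<^sup>2) N * qpoch (- (q\<^sup>2)) (q\<^sup>2) N = qpoch (q ^ 4) (q ^ 4) N"
      using qpoch_pm[of "q\<^sup>2" N] by (simp flip: power_mult)
    show ?thesis unfolding qpoch_even using pm by (simp add: algebra_simps flip: pm)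
  qed
  have sm: "strict_mono (\<lambda>N::nat. 2 * N)" by (simp add: strict_mono_def)
  have L1: "(\<lambda>N. qpoch q q (2 * N) * qpoch (- (q\<^sup>2)) (q\<^sup>2) N) \<longlonglongrightarrow> qpoch_inf q q * C"
    unfolding C_def
    using tendsto_mult[OF LIMSEQ_subseq_LIMSEQ[OF qpoch_lim[OF assms] sm] qpoch_lim[OF nq2]]
    by (simp add: o_def)
  have L2: "(\<lambda>N. qpoch q q (2 * N) * qpoch (- (q\<^sup>2)) (q\<^sup>2) N)
      \<longlonglongrightarrow> qpoch_inf q (q\<^sup>2) * qpoch_inf (q ^ 4) (q ^ 4)"
    unfolding fin by (intro tendsto_mult qpoch_lim nq2 nq4)
  have eq: "qpoch_inf q q * C = qpoch_inf q (q\<^sup>2) * qpoch_inf (q ^ 4) (q ^ 4)"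
    using L1 L2 LIMSEQ_unique by blast
  have nz4: "qpoch_inf (q ^ 4) (q ^ 4) \<noteq> 0" by (rule qpoch_inf_nz[OF nq4 ne_4])
  have "qpoch_inf q (q\<^sup>2) / C = qpoch_inf q q / qpoch_inf (q ^ 4) (q ^ 4)"
    using eq Cnz nz4 by (simp add: field_simps)
  then show ?thesis using main by simp
qed

end
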